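(* For all integers $k\ge1$ and $t\ge2$, $\Pr_{G\sim G(n,1/2)}[\theta^t(G)\not\models\mathrm{EA}^t_k]=\mathrm{negl}(n)$.
   Context: $G(n,1/2)$ is the uniform distribution over simple graphs on $[n]$. For a graph $G$, $\theta^t(G)$ is the $t$-hypergraph on $V(G)$ defined by the $\mathrm{FO}[\oplus]$ formula $\theta^t(x_1,\dots,x_t)=\oplus y\,\bigwedge_{i=1}^t E(y,x_i)$: a $t$-element set $\{v_1,\dots,v_t\}$ is a hyperedge iff the number of vertices $y$ adjacent to all of $v_1,\dots,v_t$ is odd. A $t$-hypergraph satisfies $\mathrm{EA}^t_k$ if for every vertex set $S$ of size $k$ and every $T\subseteq\binom{S}{t-1}$ there exists $v\notin S$ such that for every $\{s_1,\dots,s_{t-1}\}\in\binom{S}{t-1}$, $\{s_1,\dots,s_{t-1},v\}$ is a hyperedge iff $\{s_1,\dots,s_{t-1}\}\in T$. Negligible means eventually below $1/p(n)$ for every polynomial $p$. *)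

theory Defs
  imports Complex_Main
begin

definition vpairs :: "nat \<Rightarrow> nat set set" where
  "vpairs n = {e. e \<subseteq> {0..<n} \<and> card e = 2}"

definition graphs :: "nat \<Rightarrow> nat set set set" where
  "graphs n = Pow (vpairs n)"

definition adj :: "nat set set \<Rightarrow> nat \<Rightarrow> nat \<Rightarrow> bool" where
  "adj G x y \<longleftrightarrow> {x, y} \<in> G"

definition theta :: "nat \<Rightarrow> nat \<Rightarrow> nat set set \<Rightarrow> nat set set" where
  "theta t n G = {X. X \<subseteq> {0..<n} \<and> card X = t \<and>
      odd (card {y \<in> {0..<n}. \<forall>x\<in>X. adj G y x})}"

definition EA :: "nat \<Rightarrow> nat \<Rightarrow> nat set \<Rightarrow> nat set set \<Rightarrow> bool" where
  "EA t k V H \<longleftrightarrow>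
     (\<forall>S. S \<subseteq> V \<longrightarrow> card S = k \<longrightarrow>
       (\<forall>T. T \<subseteq> {U. U \<subseteq> S \<and> card U = t - 1} \<longrightarrow>
         (\<exists>v\<in>V - S. \<forall>U. U \<subseteq> S \<longrightarrow> card U = t - 1 \<longrightarrow>
              (insert v U \<in> H \<longleftrightarrow> U \<in> T))))"

text \<open>Probability under G(n,1/2) (uniform over all simple graphs on [n])
that theta^t(G) fails EA^t_k.\<close>

definition fail_prob :: "nat \<Rightarrow> nat \<Rightarrow> nat \<Rightarrow> real" where
  "fail_prob t k n =
     real (card {G \<in> graphs n. \<not> EA t k {0..<n} (theta t n G)}) / real (card (graphs n))"

definition negligible :: "(nat \<Rightarrow> real) \<Rightarrow> bool" where
  "negligible f \<longleftrightarrow> (\<forall>c::nat. \<forall>\<^sub>F n in sequentially. \<bar>f n\<bar> < 1 / real n ^ c)"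

end

theory Submission
  imports Defs
begin

lemma split_count:
  assumes "finite E" "F \<subseteq> E"
  shows "card {G \<in> Pow E. \<phi> G} = (\<Sum>A\<in>Pow F. card {B \<in> Pow (E - F). \<phi> (A \<union> B)})"
proof -
  let ?S = "SIGMA A:Pow F. {B \<in> Pow (E - F). \<phi> (A \<union> B)}"
  have fF: "finite F" using assms finite_subset by blast
  have eq: "{G \<in> Pow E. \<phi> G} = (\<lambda>(A,B). A \<union> B) ` ?S"
  proof
    show "{G \<in> Pow E. \<phi> G} \<subseteq> (\<lambda>(A,B). A \<union> B) ` ?S"
    proof
      fix G assume G: "G \<in> {G \<in> Pow E. \<phi> G}"
      have u: "G \<inter> F \<union> (G - F) = G" by blast
      have eqG: "G = (\<lambda>(A,B). A \<union> B) (G \<inter> F, G - F)" using u by simp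
      have mem: "(G \<inter> F, G - F) \<in> ?S" using G u by auto
      show "G \<in> (\<lambda>(A,B). A \<union> B) ` ?S" by (rule rev_image_eqI[of "(G \<inter> F, G - F)" ?S G "\<lambda>(A,B). A \<union> B", OF mem eqG])
    qed
  next
    show "(\<lambda>(A,B). A \<union> B) ` ?S \<subseteq> {G \<in> Pow E. \<phi> G}" using assms by auto
  qed
  have inj: "inj_on (\<lambda>(A,B). A \<union> B) ?S"
  proof (rule inj_onI, clarify)
    fix A B A' B'
    assume "A \<subseteq> F" "B \<subseteq> E - F" "A' \<subseteq> F" "B' \<subseteq> E - F" "A \<union> B = A' \<union> B'"
    then show "A = A' \<and> B = B'" by blast
  qed
  have "card {G \<in> Pow E. \<phi> G} = card ?S" unfolding eq using inj by (rule card_image)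
  also have "\<dots> = (\<Sum>A\<in>Pow F. card {B \<in> Pow (E - F). \<phi> (A \<union> B)})"
    by (rule card_SigmaI) (use assms fF in auto)
  finally show ?thesis .
qed

lemma sum_if_count: "finite D \<Longrightarrow> (\<Sum>C\<in>Pow D. if Q C then (K::nat) else 0) = card {C \<in> Pow D. Q C} * K"
  by (simp add: sum.If_cases Int_def)

lemma prod_count:
  assumes "finite W" "\<forall>v\<in>W. finite (D v)"
    "\<forall>v\<in>W. \<forall>w\<in>W. v \<noteq> w \<longrightarrow> D v \<inter> D w = {}"
  shows "card {B \<in> Pow (\<Union>v\<in>W. D v). \<forall>v\<in>W. Q v (B \<inter> D v)}
       = (\<Prod>v\<in>W. card {C \<in> Pow (D v). Q v C})"
  using assms
proof (induction W rule: finite_induct)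
  case empty
  then show ?case by simp
next
  case (insert w W)
  let ?U = "\<Union>v\<in>W. D v"
  have disjv: "D w \<inter> D v = {}" if "v \<in> W" for v
  proof -
    have "w \<in> insert w W" "v \<in> insert w W" "w \<noteq> v" using that insert.hyps by auto
    then show ?thesis using insert.prems(2) by blast
  qed
  have disj: "D w \<inter> ?U = {}" using disjv by blast
  have finw: "finite (D w)" using insert.prems(1) by blast
  have finU: "finite ?U" using insert.prems(1) insert.hyps(1) by blast
  have fin: "finite (D w \<union> ?U)" using finw finU by blast
  have IH: "card {B \<in> Pow ?U. \<forall>v\<in>W. Q v (B \<inter> D v)} = (\<Prod>v\<in>W. card {C \<in> Pow (D v). Q v C})"
  proof (rule insert.IH)
    show "\<forall>v\<in>W. finite (D v)" using insert.prems(1) by blast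
    show "\<forall>v\<in>W. \<forall>w\<in>W. v \<noteq> w \<longrightarrow> D v \<inter> D w = {}" using insert.prems(2) by blast
  qed
  have e0: "(\<Union>v\<in>insert w W. D v) = D w \<union> ?U" by simp
  have "card {B \<in> Pow (\<Union>v\<in>insert w W. D v). \<forall>v\<in>insert w W. Q v (B \<inter> D v)}
      = card {B \<in> Pow (D w \<union> ?U). \<forall>v\<in>insert w W. Q v (B \<inter> D v)}" by (simp only: e0)
  also have "\<dots> = (\<Sum>C\<in>Pow (D w). card {B \<in> Pow (D w \<union> ?U - D w).
                      \<forall>v\<in>insert w W. Q v ((C \<union> B) \<inter> D v)})"
    by (rule split_count[OF fin]) blast
  also have "\<dots> = (\<Sum>C\<in>Pow (D w). if Q w C then card {B \<in> Pow ?U. \<forall>v\<in>W. Q v (B \<inter> D v)} else 0)"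
  proof (rule sum.cong[OF refl])
    fix C assume C: "C \<in> Pow (D w)"
    have e1: "D w \<union> ?U - D w = ?U" using disj by blast
    have a: "(C \<union> B) \<inter> D w = C" if "B \<subseteq> ?U" for B using that C disj by blast
    have b: "(C \<union> B) \<inter> D v = B \<inter> D v" if "v \<in> W" for B v
      using disjv[OF that] C by blast
    have "{B \<in> Pow ?U. \<forall>v\<in>insert w W. Q v ((C \<union> B) \<inter> D v)}
        = (if Q w C then {B \<in> Pow ?U. \<forall>v\<in>W. Q v (B \<inter> D v)} else {})"
    proof -
      have "(\<forall>v\<in>insert w W. Q v ((C \<union> B) \<inter> D v)) \<longleftrightarrow> Q w C \<and> (\<forall>v\<in>W. Q v (B \<inter> D v))"
        if "B \<subseteq> ?U" for B
      proof -
        have "(\<forall>v\<in>W. Q v ((C \<union> B) \<inter> D v)) \<longleftrightarrow> (\<forall>v\<in>W. Q v (B \<inter> D v))"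
          using b by (metis (no_types, lifting))
        then show ?thesis using a[OF that] by simp
      qed
      then show ?thesis by (auto simp del: Ball_def)
    qed
    then show "card {B \<in> Pow (D w \<union> ?U - D w). \<forall>v\<in>insert w W. Q v ((C \<union> B) \<inter> D v)}
        = (if Q w C then card {B \<in> Pow ?U. \<forall>v\<in>W. Q v (B \<inter> D v)} else 0)"
      by (simp only: e1) simp
  qed
  also have "\<dots> = card {C \<in> Pow (D w). Q w C} * card {B \<in> Pow ?U. \<forall>v\<in>W. Q v (B \<inter> D v)}"
    by (rule sum_if_count[OF finw])
  also have "\<dots> = card {C \<in> Pow (D w). Q w C} * (\<Prod>v\<in>W. card {C \<in> Pow (D v). Q v C})"
    by (simp only: IH)
  also have "\<dots> = (\<Prod>v\<in>insert w W. card {C \<in> Pow (D v). Q v C})"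
    using insert.hyps by simp
  finally show ?case .
qed

lemma count_compl:
  assumes "finite D"
  shows "real (card {C \<in> Pow D. \<not> Q C}) = 2 ^ card D - real (card {C \<in> Pow D. Q C})"
proof -
  have u: "Pow D = {C \<in> Pow D. Q C} \<union> {C \<in> Pow D. \<not> Q C}" by blast
  have "card (Pow D) = card {C \<in> Pow D. Q C} + card {C \<in> Pow D. \<not> Q C}"
    by (subst u, rule card_Un_disjoint) (use assms in auto)
  then have "card {C \<in> Pow D. Q C} + card {C \<in> Pow D. \<not> Q C} = 2 ^ card D"
    using card_Pow[of D] assms by simp
  then have "real (card {C \<in> Pow D. Q C} + card {C \<in> Pow D. \<not> Q C}) = real ((2::nat) ^ card D)"
    by (rule arg_cong)
  then have "real (card {C \<in> Pow D. Q C}) + real (card {C \<in> Pow D. \<not> Q C}) = 2 ^ card D"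
    by simp
  then show ?thesis by linarith
qed

lemma blocks_bound:
  fixes E F :: "'e set" and D :: "'v \<Rightarrow> 'e set" and p :: real
  assumes finE: "finite E" and finW: "finite W"
    and DE: "\<forall>v\<in>W. D v \<subseteq> E"
    and disj: "\<forall>v\<in>W. \<forall>w\<in>W. v \<noteq> w \<longrightarrow> D v \<inter> D w = {}"
    and Fdef: "F = E - (\<Union>v\<in>W. D v)"
    and dep: "\<forall>v\<in>W. \<forall>G. G \<subseteq> E \<longrightarrow> P v G = P v (G \<inter> (F \<union> D v))"
    and prob: "\<forall>v\<in>W. \<forall>A. A \<subseteq> F \<longrightarrow> Good A \<longrightarrow>
                  p * 2 ^ card (D v) \<le> real (card {C \<in> Pow (D v). P v (A \<union> C)})"
    and p0: "0 \<le> p" and p1: "p \<le> 1"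
  shows "real (card {G \<in> Pow E. Good (G \<inter> F) \<and> (\<forall>v\<in>W. \<not> P v G)}) \<le> (1 - p) ^ card W * 2 ^ card E"
proof -
  let ?U = "\<Union>v\<in>W. D v"
  have FE: "F \<subseteq> E" using Fdef by blast
  have EF: "E - F = ?U" using Fdef DE by blast
  have finD: "\<forall>v\<in>W. finite (D v)" using DE finE finite_subset by blast
  have finF: "finite F" using FE finE finite_subset by blast
  have cardU: "card ?U = (\<Sum>v\<in>W. card (D v))"
    by (rule card_UN_disjoint[OF finW]) (use finD disj in auto)
  have cardE: "card E = card F + card ?U"
  proof -
    have "E = F \<union> ?U" "F \<inter> ?U = {}" using Fdef DE by blast+
    moreover have "finite ?U" using finW finD by blast
    ultimately show ?thesis using card_Un_disjoint finF by metis
  qed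
  let ?K = "(1 - p) ^ card W * 2 ^ card ?U :: real"
  have termb: "real (card {B \<in> Pow (E - F). Good ((A \<union> B) \<inter> F) \<and> (\<forall>v\<in>W. \<not> P v (A \<union> B))}) \<le> ?K"
    if A: "A \<subseteq> F" for A
  proof (cases "Good A")
    case False
    have emp: "{B \<in> Pow (E - F). Good ((A \<union> B) \<inter> F) \<and> (\<forall>v\<in>W. \<not> P v (A \<union> B))} = {}"
    proof -
      have "(A \<union> B) \<inter> F = A" if "B \<subseteq> E - F" for B using that A by blast
      then show ?thesis using False by auto
    qed
    have K0: "0 \<le> ?K" by (intro mult_nonneg_nonneg zero_le_power) (use p1 in auto)
    show ?thesis by (simp only: emp card.empty of_nat_0 K0)
  next
    case True
    have key: "P v (A \<union> B) = P v (A \<union> (B \<inter> D v))" if "B \<subseteq> ?U" "v \<in> W" for B v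
    proof -
      have "A \<union> B \<subseteq> E" using A FE that(1) DE by blast
      then have "P v (A \<union> B) = P v ((A \<union> B) \<inter> (F \<union> D v))" using dep that(2) by blast
      moreover have "(A \<union> B) \<inter> (F \<union> D v) = A \<union> (B \<inter> D v)" using A that Fdef by blast
      ultimately show ?thesis by simp
    qed
    have seteq: "{B \<in> Pow (E - F). Good ((A \<union> B) \<inter> F) \<and> (\<forall>v\<in>W. \<not> P v (A \<union> B))}
        = {B \<in> Pow ?U. \<forall>v\<in>W. \<not> P v (A \<union> (B \<inter> D v))}"
    proof -
      have "(A \<union> B) \<inter> F = A" if "B \<subseteq> E - F" for B using that A by blast
      moreover have "(\<forall>v\<in>W. \<not> P v (A \<union> B)) \<longleftrightarrow> (\<forall>v\<in>W. \<not> P v (A \<union> (B \<inter> D v)))"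
        if "B \<subseteq> ?U" for B using key[OF that] by blast
      ultimately show ?thesis using True EF by auto
    qed
    have "card {B \<in> Pow ?U. \<forall>v\<in>W. \<not> P v (A \<union> (B \<inter> D v))}
        = (\<Prod>v\<in>W. card {C \<in> Pow (D v). \<not> P v (A \<union> C)})"
      by (rule prod_count[OF finW finD disj])
    then have "real (card {B \<in> Pow ?U. \<forall>v\<in>W. \<not> P v (A \<union> (B \<inter> D v))})
        = (\<Prod>v\<in>W. real (card {C \<in> Pow (D v). \<not> P v (A \<union> C)}))"
      by (simp add: of_nat_prod)
    also have "\<dots> \<le> (\<Prod>v\<in>W. (1 - p) * 2 ^ card (D v))"
    proof (rule prod_mono)
      fix v assume v: "v \<in> W"
      have "real (card {C \<in> Pow (D v). \<not> P v (A \<union> C)}) = 2 ^ card (D v) - real (card {C \<in> Pow (D v). P v (A \<union> C)})"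
        using count_compl[of "D v" "\<lambda>C. P v (A \<union> C)"] finD v by blast
      moreover have "p * 2 ^ card (D v) \<le> real (card {C \<in> Pow (D v). P v (A \<union> C)})"
        using prob v A True by blast
      ultimately show "0 \<le> real (card {C \<in> Pow (D v). \<not> P v (A \<union> C)}) \<and>
          real (card {C \<in> Pow (D v). \<not> P v (A \<union> C)}) \<le> (1 - p) * 2 ^ card (D v)"
        by (simp add: algebra_simps)
    qed
    also have "\<dots> = ?K"
      by (simp add: prod.distrib cardU power_sum)
    finally show ?thesis using seteq by simp
  qed
  have "card {G \<in> Pow E. Good (G \<inter> F) \<and> (\<forall>v\<in>W. \<not> P v G)}
      = (\<Sum>A\<in>Pow F. card {B \<in> Pow (E - F). Good ((A \<union> B) \<inter> F) \<and> (\<forall>v\<in>W. \<not> P v (A \<union> B))})"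
    by (rule split_count[OF finE FE])
  then have "real (card {G \<in> Pow E. Good (G \<inter> F) \<and> (\<forall>v\<in>W. \<not> P v G)})
      = (\<Sum>A\<in>Pow F. real (card {B \<in> Pow (E - F). Good ((A \<union> B) \<inter> F) \<and> (\<forall>v\<in>W. \<not> P v (A \<union> B))}))"
    by (simp add: of_nat_sum)
  also have "\<dots> \<le> (\<Sum>A\<in>Pow F. ?K)"
    by (rule sum_mono) (use termb in blast)
  also have "\<dots> = 2 ^ card F * ?K" using finF by (simp add: card_Pow)
  also have "\<dots> = (1 - p) ^ card W * 2 ^ card E" using cardE by (simp add: power_add)
  finally show ?thesis .
qed

lemma theta_ins:
  assumes "v < n" "U \<subseteq> {0..<n}" "v \<notin> U" "finite U" "card U = t - 1" "1 \<le> t"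
  shows "insert v U \<in> theta t n G \<longleftrightarrow> odd (card {y \<in> {0..<n}. \<forall>x\<in>insert v U. adj G y x})"
proof -
  have "card (insert v U) = t" using assms by simp
  moreover have "insert v U \<subseteq> {0..<n}" using assms by simp
  ultimately show ?thesis unfolding theta_def by simp
qed

lemma flip_lemma:
  fixes S W R A Ob :: "_ set" and f :: "nat set \<Rightarrow> nat"
  assumes Sn: "S \<subseteq> {0..<n}" and Rn: "R \<subseteq> {0..<n}"
    and SW: "S \<inter> W = {}" and SR: "S \<inter> R = {}" and WR: "W \<inter> R = {}"
    and v: "v \<in> W" "v < n" and t1: "1 \<le> t" and finS: "finite S"
    and Adisj: "A \<inter> (\<lambda>y. {v,y}) ` R = {}"
    and f: "\<forall>U'. U' \<subseteq> S \<and> card U' = t - 1 \<longrightarrow> f U' \<in> R \<and> (\<forall>x\<in>S. adj A (f U') x \<longleftrightarrow> x \<in> U')"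
    and Ob: "Ob \<subseteq> (\<lambda>y. {v,y}) ` R - (\<lambda>U'. {v, f U'}) ` {U'. U' \<subseteq> S \<and> card U' = t - 1}"
    and U: "U \<subseteq> S" "card U = t - 1"
    and Fl: "Fl = {U'. (U' \<subseteq> S \<and> card U' = t - 1) \<and> (insert v U' \<in> theta t n (A \<union> Ob)) \<noteq> (U' \<in> T)}"
  shows "insert v U \<in> theta t n (A \<union> (Ob \<union> (\<lambda>U'. {v, f U'}) ` Fl)) \<longleftrightarrow> U \<in> T"
proof -
  let ?B = "{U'. U' \<subseteq> S \<and> card U' = t - 1}"
  let ?img = "(\<lambda>U'. {v, f U'}) ` Fl"
  let ?C = "A \<union> (Ob \<union> ?img)"
  let ?YO = "{y \<in> {0..<n}. \<forall>x\<in>insert v U. adj (A \<union> Ob) y x}"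
  let ?YC = "{y \<in> {0..<n}. \<forall>x\<in>insert v U. adj ?C y x}"
  have vS: "v \<notin> S" using v SW by blast
  have vR: "v \<notin> R" using v WR by blast
  have vU: "v \<notin> U" using vS U by blast
  have finU: "finite U" using U finS finite_subset by blast
  have Un: "U \<subseteq> {0..<n}" using U Sn by blast
  have FlB: "Fl \<subseteq> ?B" using Fl by blast
  have a: "adj ?C y x \<longleftrightarrow> adj (A \<union> Ob) y x" if "x \<in> U" for y x
  proof -
    have xS: "x \<in> S" using that U by blast
    have "{y,x} \<notin> ?img"
    proof
      assume "{y,x} \<in> ?img"
      then obtain U' where "U' \<in> Fl" "{y,x} = {v, f U'}" by blast
      moreover have "f U' \<in> R" using f FlB \<open>U' \<in> Fl\<close> by blast
      ultimately show False using xS vS SR by (auto simp: doubleton_eq_iff)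
    qed
    then show ?thesis unfolding adj_def by blast
  qed
  have b: "adj ?C y v \<longleftrightarrow> adj (A \<union> Ob) y v \<or> (\<exists>U'\<in>Fl. y = f U')" for y
  proof -
    have "{y,v} \<in> ?img \<longleftrightarrow> (\<exists>U'\<in>Fl. y = f U')"
    proof
      assume "{y,v} \<in> ?img"
      then obtain U' where "U' \<in> Fl" "{y,v} = {v, f U'}" by blast
      then show "\<exists>U'\<in>Fl. y = f U'" by (auto simp: doubleton_eq_iff)
    next
      assume "\<exists>U'\<in>Fl. y = f U'"
      then obtain U' where "U' \<in> Fl" "y = f U'" by blast
      then have "{y,v} = {v, f U'}" by auto
      then show "{y,v} \<in> ?img" using \<open>U' \<in> Fl\<close> by blast
    qed
    then show ?thesis unfolding adj_def by blast
  qed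
  have c: "\<not> adj (A \<union> Ob) (f U') v" if "U' \<in> ?B" for U'
  proof -
    have fR: "f U' \<in> R" using f that by blast
    have e: "{f U', v} = {v, f U'}" by auto
    have "{v, f U'} \<notin> A" using Adisj fR by blast
    moreover have "{v, f U'} \<notin> Ob" using Ob that by blast
    ultimately show ?thesis unfolding adj_def e by blast
  qed
  have d: "(\<forall>x\<in>U. adj (A \<union> Ob) (f U') x) \<longleftrightarrow> U = U'" if U': "U' \<in> ?B" for U'
  proof -
    have fR: "f U' \<in> R" using f U' by blast
    have d1: "adj (A \<union> Ob) (f U') x \<longleftrightarrow> adj A (f U') x" if "x \<in> S" for x
    proof -
      have "{f U', x} \<notin> Ob"
      proof
        assume "{f U', x} \<in> Ob"
        then obtain z where "{f U', x} = {v, z}" using Ob by blast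
        then show False using fR that vS vR by (auto simp: doubleton_eq_iff)
      qed
      then show ?thesis unfolding adj_def by blast
    qed
    have "(\<forall>x\<in>U. adj (A \<union> Ob) (f U') x) \<longleftrightarrow> (\<forall>x\<in>U. x \<in> U')"
      using d1 f U' U(1) by blast
    also have "\<dots> \<longleftrightarrow> U \<subseteq> U'" by blast
    also have "\<dots> \<longleftrightarrow> U = U'"
    proof
      assume "U \<subseteq> U'"
      moreover have "finite U'" using U' finS finite_subset by blast
      moreover have "card U = card U'" using U U' by simp
      ultimately show "U = U'" using card_subset_eq by blast
    qed simp
    finally show ?thesis .
  qed
  have YC: "y \<in> ?YC \<longleftrightarrow> y \<in> ?YO \<or> (U \<in> Fl \<and> y = f U)" for y
  proof (cases "\<exists>U'\<in>Fl. y = f U'")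
    case True
    then obtain U' where U'Fl: "U' \<in> Fl" and y: "y = f U'" by blast
    have U'B: "U' \<in> ?B" using U'Fl FlB by blast
    have "f U' \<in> R" using f U'B by blast
    then have yn: "y < n" using y Rn by auto
    have "y \<notin> ?YO" using c[OF U'B] y by auto
    moreover have "y \<in> ?YC \<longleftrightarrow> U = U'"
    proof -
      have "y \<in> ?YC \<longleftrightarrow> (\<forall>x\<in>U. adj ?C y x)" using b[of y] True yn by auto
      also have "\<dots> \<longleftrightarrow> (\<forall>x\<in>U. adj (A \<union> Ob) y x)" using a by blast
      also have "\<dots> \<longleftrightarrow> U = U'" using d[OF U'B] y by simp
      finally show ?thesis .
    qed
    moreover have "(U \<in> Fl \<and> y = f U) \<longleftrightarrow> U = U'"
    proof
      assume h: "U \<in> Fl \<and> y = f U"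
      have UB0: "U \<in> ?B" using U by blast
      have "\<forall>x\<in>U. adj (A \<union> Ob) (f U) x" using d[OF UB0] by simp
      then show "U = U'" using d[OF U'B] y h by simp
    next
      assume "U = U'"
      then show "U \<in> Fl \<and> y = f U" using U'Fl y by simp
    qed
    ultimately show ?thesis by blast
  next
    case False
    have "y \<in> ?YC \<longleftrightarrow> y \<in> ?YO" using a b[of y] False by auto
    moreover have "\<not> (U \<in> Fl \<and> y = f U)" using False by blast
    ultimately show ?thesis by blast
  qed
  have UB: "U \<in> ?B" using U by blast
  have nf: "f U \<notin> ?YO" using c[OF UB] by auto
  have finYO: "finite ?YO" by simp
  have cardC: "card ?YC = (if U \<in> Fl then Suc (card ?YO) else card ?YO)"
  proof (cases "U \<in> Fl")
    case True
    then have "?YC = insert (f U) ?YO" using YC by blast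
    then show ?thesis using True nf finYO by simp
  next
    case False
    then have "?YC = ?YO" using YC by blast
    then show ?thesis using False by simp
  qed
  have thC: "insert v U \<in> theta t n ?C \<longleftrightarrow> odd (card ?YC)"
    by (rule theta_ins[OF v(2) Un vU finU U(2) t1])
  have thO: "insert v U \<in> theta t n (A \<union> Ob) \<longleftrightarrow> odd (card ?YO)"
    by (rule theta_ins[OF v(2) Un vU finU U(2) t1])
  have FlU: "U \<in> Fl \<longleftrightarrow> (insert v U \<in> theta t n (A \<union> Ob)) \<noteq> (U \<in> T)" using Fl UB by blast
  show ?thesis using thC thO FlU cardC by auto
qed

lemma vpair_mem: "{a,b} \<in> vpairs n \<longleftrightarrow> a < n \<and> b < n \<and> a \<noteq> b"
  by (auto simp: vpairs_def card_insert_if)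

lemma fin_vpairs: "finite (vpairs n)"
proof -
  have "vpairs n \<subseteq> Pow {0..<n}" unfolding vpairs_def by blast
  then show ?thesis using finite_subset by blast
qed

lemma half_pow_le: "(1/2::real) ^ a * 2 ^ b \<le> 1" if "b \<le> a"
proof -
  have "(2::real) ^ b \<le> 2 ^ a" using that by (simp add: power_increasing)
  moreover have "(1/2::real) ^ a * 2 ^ a = 1" by (simp add: power_mult_distrib[symmetric])
  moreover have "(0::real) \<le> (1/2) ^ a" by simp
  ultimately show ?thesis by (metis mult_left_mono)
qed

lemma good_fail_count:
  assumes Sn: "S \<subseteq> {0..<n}" and Rn: "R \<subseteq> {0..<n}" and SR: "S \<inter> R = {}"
    and finS: "finite S" and U: "U \<subseteq> S"
  shows "real (card {G \<in> Pow (vpairs n). \<forall>y\<in>R. \<not> (\<forall>x\<in>S. adj G y x \<longleftrightarrow> x \<in> U)})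
     \<le> (1 - (1/2) ^ card S) ^ card R * 2 ^ card (vpairs n)"
proof -
  define D where "D y = (\<lambda>x. {y,x}) ` S" for y
  define F where "F = vpairs n - (\<Union>y\<in>R. D y)"
  define P where "P y G = (\<forall>x\<in>S. adj G y x \<longleftrightarrow> x \<in> U)" for y G
  have finR: "finite R" using Rn finite_subset by blast
  have DE: "\<forall>y\<in>R. D y \<subseteq> vpairs n"
  proof (intro ballI subsetI)
    fix y e assume y: "y \<in> R" and e: "e \<in> D y"
    then obtain x where x: "x \<in> S" "e = {y,x}" unfolding D_def by blast
    then have "y \<noteq> x" using y SR by blast
    then show "e \<in> vpairs n" using x y Sn Rn by (auto simp: vpair_mem)
  qed
  have disj: "\<forall>y\<in>R. \<forall>y'\<in>R. y \<noteq> y' \<longrightarrow> D y \<inter> D y' = {}"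
  proof (intro ballI impI)
    fix y y' assume y: "y \<in> R" and y': "y' \<in> R" and ne: "y \<noteq> y'"
    show "D y \<inter> D y' = {}"
    proof (rule ccontr)
      assume "D y \<inter> D y' \<noteq> {}"
      then obtain x x' where x: "x \<in> S" "x' \<in> S" and eq: "{y,x} = {y',x'}" unfolding D_def by blast
      then have "y = x'" using ne by (auto simp: doubleton_eq_iff)
      then show False using x y SR by blast
    qed
  qed
  have dep: "\<forall>y\<in>R. \<forall>G. G \<subseteq> vpairs n \<longrightarrow> P y G = P y (G \<inter> (F \<union> D y))"
  proof (intro ballI allI impI)
    fix y G assume y: "y \<in> R" and G: "G \<subseteq> vpairs n"
    have "adj (G \<inter> (F \<union> D y)) y x = adj G y x" if "x \<in> S" for x
    proof -
      have "{y,x} \<in> D y" using that unfolding D_def by blast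
      then show ?thesis unfolding adj_def by blast
    qed
    then show "P y G = P y (G \<inter> (F \<union> D y))" unfolding P_def by simp
  qed
  have prob: "\<forall>y\<in>R. \<forall>A. A \<subseteq> F \<longrightarrow> True \<longrightarrow>
      (1/2) ^ card S * 2 ^ card (D y) \<le> real (card {C \<in> Pow (D y). P y (A \<union> C)})"
  proof (intro ballI allI impI)
    fix y A assume y: "y \<in> R" and A: "A \<subseteq> F"
    define C0 where "C0 = (\<lambda>x. {y,x}) ` U"
    have C0D: "C0 \<subseteq> D y" unfolding C0_def D_def using U by blast
    have "P y (A \<union> C0)" unfolding P_def
    proof
      fix x assume x: "x \<in> S"
      have yx: "y \<noteq> x" using x y SR by blast
      have "{y,x} \<in> D y" using x unfolding D_def by blast
      then have nA: "{y,x} \<notin> A" using A y unfolding F_def by blast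
      have "{y,x} \<in> C0 \<longleftrightarrow> x \<in> U"
      proof
        assume "{y,x} \<in> C0"
        then obtain x' where "x' \<in> U" "{y,x} = {y,x'}" unfolding C0_def by blast
        then show "x \<in> U" using yx by (auto simp: doubleton_eq_iff)
      qed (auto simp: C0_def)
      then show "adj (A \<union> C0) y x \<longleftrightarrow> x \<in> U" unfolding adj_def using nA by blast
    qed
    then have mem: "C0 \<in> {C \<in> Pow (D y). P y (A \<union> C)}" using C0D by blast
    have finD: "finite (D y)" unfolding D_def using finS by simp
    have "finite {C \<in> Pow (D y). P y (A \<union> C)}" using finD by simp
    then have "1 \<le> card {C \<in> Pow (D y). P y (A \<union> C)}"
      using mem by (metis One_nat_def Suc_leI card_gt_0_iff empty_iff)
    moreover have "card (D y) \<le> card S" unfolding D_def by (rule card_image_le[OF finS])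
    then have "(1/2::real) ^ card S * 2 ^ card (D y) \<le> 1" by (rule half_pow_le)
    ultimately show "(1/2) ^ card S * 2 ^ card (D y) \<le> real (card {C \<in> Pow (D y). P y (A \<union> C)})"
      by linarith
  qed
  have main: "real (card {G \<in> Pow (vpairs n). (\<lambda>_. True) (G \<inter> F) \<and> (\<forall>y\<in>R. \<not> P y G)})
      \<le> (1 - (1/2) ^ card S) ^ card R * 2 ^ card (vpairs n)"
    by (rule blocks_bound[where Good="\<lambda>_. True" and P=P and p="(1/2) ^ card S",
          OF fin_vpairs finR DE disj F_def dep prob]) (auto intro: power_le_one)
  then show ?thesis unfolding P_def by simp
qed

lemma un_int_lemma: "X \<subseteq> D - Y \<Longrightarrow> I \<subseteq> Y \<Longrightarrow> (X \<union> I) \<inter> (D - Y) = X"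
  by blast

lemma ext_fail_count:
  assumes Sn: "S \<subseteq> {0..<n}" and Wn: "W \<subseteq> {0..<n}" and Rn: "R \<subseteq> {0..<n}"
    and SW: "S \<inter> W = {}" and SR: "S \<inter> R = {}" and WR: "W \<inter> R = {}"
    and finS: "finite S" and t1: "1 \<le> t"
  shows "real (card {G \<in> Pow (vpairs n).
            (\<forall>U. U \<subseteq> S \<and> card U = t - 1 \<longrightarrow> (\<exists>y\<in>R. \<forall>x\<in>S. adj G y x \<longleftrightarrow> x \<in> U)) \<and>
            (\<forall>v\<in>W. \<not> (\<forall>U. U \<subseteq> S \<longrightarrow> card U = t - 1 \<longrightarrow> (insert v U \<in> theta t n G \<longleftrightarrow> U \<in> T)))})
     \<le> (1 - (1/2) ^ (2 ^ card S)) ^ card W * 2 ^ card (vpairs n)"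
proof -
  let ?B = "{U. U \<subseteq> S \<and> card U = t - 1}"
  define D where "D v = (\<lambda>y. {v,y}) ` R" for v
  define F where "F = vpairs n - (\<Union>v\<in>W. D v)"
  define Good where "Good G = (\<forall>U. U \<subseteq> S \<and> card U = t - 1 \<longrightarrow> (\<exists>y\<in>R. \<forall>x\<in>S. adj G y x \<longleftrightarrow> x \<in> U))" for G
  define P where "P v G = (\<forall>U. U \<subseteq> S \<longrightarrow> card U = t - 1 \<longrightarrow> (insert v U \<in> theta t n G \<longleftrightarrow> U \<in> T))" for v G
  have finW: "finite W" using Wn finite_subset by blast
  have finR: "finite R" using Rn finite_subset by blast
  have DE: "\<forall>v\<in>W. D v \<subseteq> vpairs n"
  proof (intro ballI subsetI)
    fix v e assume v: "v \<in> W" and e: "e \<in> D v"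
    then obtain y where y: "y \<in> R" "e = {v,y}" unfolding D_def by blast
    then have "v \<noteq> y" using v WR by blast
    then show "e \<in> vpairs n" using y v Wn Rn by (auto simp: vpair_mem)
  qed
  have disj: "\<forall>v\<in>W. \<forall>w\<in>W. v \<noteq> w \<longrightarrow> D v \<inter> D w = {}"
  proof (intro ballI impI)
    fix v w assume v: "v \<in> W" and w: "w \<in> W" and ne: "v \<noteq> w"
    show "D v \<inter> D w = {}"
    proof (rule ccontr)
      assume "D v \<inter> D w \<noteq> {}"
      then obtain y y' where y: "y \<in> R" "y' \<in> R" and eq: "{v,y} = {w,y'}" unfolding D_def by blast
      then have "v = y'" using ne by (auto simp: doubleton_eq_iff)
      then show False using v y WR by blast
    qed
  qed
  have RS_F: "{y,x} \<in> F" if "y \<in> R" "x \<in> S" for y x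
  proof -
    have "y \<noteq> x" using that SR by blast
    then have "{y,x} \<in> vpairs n" using that Rn Sn by (auto simp: vpair_mem)
    moreover have "{y,x} \<notin> D v" if "v \<in> W" for v
    proof
      assume "{y,x} \<in> D v"
      then obtain z where "z \<in> R" "{y,x} = {v,z}" unfolding D_def by blast
      then have "v = y \<or> v = x" by (auto simp: doubleton_eq_iff)
      then show False using that \<open>y \<in> R\<close> \<open>x \<in> S\<close> WR SW by blast
    qed
    ultimately show ?thesis unfolding F_def by blast
  qed
  have GoodF: "Good (G \<inter> F) = Good G" for G
  proof -
    have h: "adj (G \<inter> F) y x = adj G y x" if "y \<in> R" "x \<in> S" for y x
      using RS_F[OF that] unfolding adj_def by blast
    have "(\<exists>y\<in>R. \<forall>x\<in>S. adj (G \<inter> F) y x \<longleftrightarrow> x \<in> U) \<longleftrightarrow> (\<exists>y\<in>R. \<forall>x\<in>S. adj G y x \<longleftrightarrow> x \<in> U)" for U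
    proof
      assume "\<exists>y\<in>R. \<forall>x\<in>S. adj (G \<inter> F) y x \<longleftrightarrow> x \<in> U"
      then obtain y where y: "y \<in> R" "\<forall>x\<in>S. adj (G \<inter> F) y x \<longleftrightarrow> x \<in> U" by blast
      then have "\<forall>x\<in>S. adj G y x \<longleftrightarrow> x \<in> U" using h by blast
      then show "\<exists>y\<in>R. \<forall>x\<in>S. adj G y x \<longleftrightarrow> x \<in> U" using y(1) by blast
    next
      assume "\<exists>y\<in>R. \<forall>x\<in>S. adj G y x \<longleftrightarrow> x \<in> U"
      then obtain y where y: "y \<in> R" "\<forall>x\<in>S. adj G y x \<longleftrightarrow> x \<in> U" by blast
      then have "\<forall>x\<in>S. adj (G \<inter> F) y x \<longleftrightarrow> x \<in> U" using h by blast
      then show "\<exists>y\<in>R. \<forall>x\<in>S. adj (G \<inter> F) y x \<longleftrightarrow> x \<in> U" using y(1) by blast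
    qed
    then show ?thesis unfolding Good_def by simp
  qed
  have dep: "\<forall>v\<in>W. \<forall>G. G \<subseteq> vpairs n \<longrightarrow> P v G = P v (G \<inter> (F \<union> D v))"
  proof (intro ballI allI impI)
    fix v G assume v: "v \<in> W" and G: "G \<subseteq> vpairs n"
    have vn: "v < n" using v Wn by auto
    have ed: "adj (G \<inter> (F \<union> D v)) y x = adj G y x" if x: "x \<in> insert v S" for x y
    proof -
      have "{y,x} \<in> F \<union> D v" if yx: "{y,x} \<in> G"
      proof (rule ccontr)
        assume "{y,x} \<notin> F \<union> D v"
        moreover have "{y,x} \<in> vpairs n" using yx G by blast
        ultimately obtain w where w: "w \<in> W" "{y,x} \<in> D w" "w \<noteq> v" unfolding F_def by blast
        then obtain z where z: "z \<in> R" "{y,x} = {w,z}" unfolding D_def by blast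
        then have "x = w \<or> x = z" by (auto simp: doubleton_eq_iff)
        then show False using x w z v SW SR WR by blast
      qed
      then show ?thesis unfolding adj_def by blast
    qed
    have "(insert v U \<in> theta t n G) = (insert v U \<in> theta t n (G \<inter> (F \<union> D v)))"
      if U: "U \<subseteq> S" "card U = t - 1" for U
    proof -
      have Un: "U \<subseteq> {0..<n}" using U Sn by blast
      have vU: "v \<notin> U" using U v SW by blast
      have finU: "finite U" using U finS finite_subset by blast
      have ed2: "(\<forall>x\<in>insert v U. adj G y x) = (\<forall>x\<in>insert v U. adj (G \<inter> (F \<union> D v)) y x)" for y
      proof -
        have "\<forall>x\<in>insert v U. adj (G \<inter> (F \<union> D v)) y x = adj G y x" using ed U(1) by blast
        then show ?thesis by blast
      qed
      have "{y \<in> {0..<n}. \<forall>x\<in>insert v U. adj G y x} = {y \<in> {0..<n}. \<forall>x\<in>insert v U. adj (G \<inter> (F \<union> D v)) y x}"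
        using ed2 by simp
      then show ?thesis
        using theta_ins[OF vn Un vU finU U(2) t1, of G] theta_ins[OF vn Un vU finU U(2) t1, of "G \<inter> (F \<union> D v)"]
        by simp
    qed
    then show "P v G = P v (G \<inter> (F \<union> D v))" unfolding P_def by blast
  qed
  have prob: "\<forall>v\<in>W. \<forall>A. A \<subseteq> F \<longrightarrow> Good A \<longrightarrow>
      (1/2) ^ (2 ^ card S) * 2 ^ card (D v) \<le> real (card {C \<in> Pow (D v). P v (A \<union> C)})"
  proof (intro ballI allI impI)
    fix v A assume v: "v \<in> W" and A: "A \<subseteq> F" and GA: "Good A"
    have vn: "v < n" using v Wn by auto
    have "\<forall>U. \<exists>y. U \<subseteq> S \<and> card U = t - 1 \<longrightarrow> y \<in> R \<and> (\<forall>x\<in>S. adj A y x \<longleftrightarrow> x \<in> U)"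
      using GA unfolding Good_def by blast
    from choice[OF this] obtain f where f: "\<forall>U. U \<subseteq> S \<and> card U = t - 1 \<longrightarrow> f U \<in> R \<and> (\<forall>x\<in>S. adj A (f U) x \<longleftrightarrow> x \<in> U)"
      by blast
    have Adisj: "A \<inter> (\<lambda>y. {v,y}) ` R = {}" using A v unfolding F_def D_def by blast
    define Y where "Y = (\<lambda>U'. {v, f U'}) ` ?B"
    have YD: "Y \<subseteq> D v" unfolding Y_def D_def using f by blast
    define Fl where "Fl Ob = {U'. (U' \<subseteq> S \<and> card U' = t - 1) \<and> (insert v U' \<in> theta t n (A \<union> Ob)) \<noteq> (U' \<in> T)}" for Ob
    define g where "g Ob = Ob \<union> (\<lambda>U'. {v, f U'}) ` Fl Ob" for Ob
    have gY: "(\<lambda>U'. {v, f U'}) ` Fl Ob \<subseteq> Y" for Ob unfolding Y_def Fl_def by blast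
    have inj: "inj_on g (Pow (D v - Y))"
    proof (rule inj_onI)
      fix O1 O2 assume O1: "O1 \<in> Pow (D v - Y)" and O2: "O2 \<in> Pow (D v - Y)" and eq: "g O1 = g O2"
      have O1s: "O1 \<subseteq> D v - Y" using O1 by blast
      have O2s: "O2 \<subseteq> D v - Y" using O2 by blast
      have h1: "g O1 \<inter> (D v - Y) = O1" unfolding g_def by (rule un_int_lemma[OF O1s gY])
      have h2: "g O2 \<inter> (D v - Y) = O2" unfolding g_def by (rule un_int_lemma[OF O2s gY])
      have "O1 = g O1 \<inter> (D v - Y)" using h1 by (rule sym)
      also have "\<dots> = g O2 \<inter> (D v - Y)" by (simp only: eq)
      also have "\<dots> = O2" by (rule h2)
      finally show "O1 = O2" .
    qed
    have img: "g ` Pow (D v - Y) \<subseteq> {C \<in> Pow (D v). P v (A \<union> C)}"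
    proof
      fix C assume "C \<in> g ` Pow (D v - Y)"
      then obtain Ob where Ob: "Ob \<in> Pow (D v - Y)" and C: "C = g Ob" by blast
      have "C \<subseteq> D v" using Ob gY[of Ob] YD unfolding C g_def by blast
      moreover have "P v (A \<union> C)" unfolding P_def
      proof (intro allI impI)
        fix U assume U: "U \<subseteq> S" "card U = t - 1"
        have Ob': "Ob \<subseteq> (\<lambda>y. {v,y}) ` R - (\<lambda>U'. {v, f U'}) ` ?B" using Ob unfolding D_def Y_def by blast
        show "insert v U \<in> theta t n (A \<union> C) \<longleftrightarrow> U \<in> T"
          unfolding C g_def
          by (rule flip_lemma[OF Sn Rn SW SR WR v vn t1 finS Adisj f Ob' U Fl_def])
      qed
      ultimately show "C \<in> {C \<in> Pow (D v). P v (A \<union> C)}" by blast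
    qed
    have finDv: "finite (D v)" unfolding D_def using finR by simp
    have finY: "finite Y" using YD finDv finite_subset by blast
    have "card (Pow (D v - Y)) \<le> card {C \<in> Pow (D v). P v (A \<union> C)}"
    proof -
      have "card (Pow (D v - Y)) = card (g ` Pow (D v - Y))" using card_image[OF inj] by simp
      also have "\<dots> \<le> card {C \<in> Pow (D v). P v (A \<union> C)}"
        by (rule card_mono) (use img finDv in auto)
      finally show ?thesis .
    qed
    moreover have "card (Pow (D v - Y)) = 2 ^ (card (D v) - card Y)"
      using finDv YD finY by (simp add: card_Pow card_Diff_subset)
    moreover have cY: "card Y \<le> 2 ^ card S"
    proof -
      have "card Y \<le> card ?B" unfolding Y_def by (rule card_image_le) (use finS in simp)
      also have "\<dots> \<le> card (Pow S)" by (rule card_mono) (use finS in auto)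
      finally show ?thesis using finS by (simp add: card_Pow)
    qed
    moreover have cYD: "card Y \<le> card (D v)" using YD finDv card_mono by blast
    ultimately have lown: "(2::nat) ^ (card (D v) - card Y) \<le> card {C \<in> Pow (D v). P v (A \<union> C)}"
      by simp
    then have "real ((2::nat) ^ (card (D v) - card Y)) \<le> real (card {C \<in> Pow (D v). P v (A \<union> C)})"
      by (simp only: of_nat_le_iff)
    then have low: "(2::real) ^ (card (D v) - card Y) \<le> real (card {C \<in> Pow (D v). P v (A \<union> C)})"
      by simp
    have e: "(2::real) ^ card (D v) = 2 ^ (card (D v) - card Y) * 2 ^ card Y"
      using cYD by (simp add: power_add[symmetric])
    have "(1/2::real) ^ (2 ^ card S) \<le> (1/2) ^ card Y"
      using cY by (rule power_decreasing) auto
    then have "(1/2::real) ^ (2 ^ card S) * 2 ^ card (D v) \<le> (1/2) ^ card Y * 2 ^ card (D v)"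
      by (rule mult_right_mono) simp
    also have "\<dots> = 2 ^ (card (D v) - card Y) * ((1/2) ^ card Y * 2 ^ card Y)"
      unfolding e by (simp add: algebra_simps)
    also have "\<dots> = 2 ^ (card (D v) - card Y)"
      by (simp add: power_mult_distrib[symmetric])
    finally show "(1/2) ^ (2 ^ card S) * 2 ^ card (D v) \<le> real (card {C \<in> Pow (D v). P v (A \<union> C)})"
      using low by linarith
  qed
  have main: "real (card {G \<in> Pow (vpairs n). Good (G \<inter> F) \<and> (\<forall>v\<in>W. \<not> P v G)})
      \<le> (1 - (1/2) ^ (2 ^ card S)) ^ card W * 2 ^ card (vpairs n)"
    by (rule blocks_bound[where Good=Good and P=P and p="(1/2) ^ (2 ^ card S)",
          OF fin_vpairs finW DE disj F_def dep prob]) (auto intro: power_le_one)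
  then show ?thesis unfolding GoodF unfolding Good_def P_def by simp
qed

lemma real_le_sumI: "(a::nat) \<le> (\<Sum>x\<in>A. f x) \<Longrightarrow> real a \<le> (\<Sum>x\<in>A. real (f x))"
proof -
  assume h: "a \<le> (\<Sum>x\<in>A. f x)"
  have "real a \<le> real (\<Sum>x\<in>A. f x)" using h by (simp only: of_nat_le_iff)
  then show ?thesis by (simp only: of_nat_sum)
qed

lemma real_le_sum2I: "(a::nat) \<le> (\<Sum>x\<in>A. f x + g x) \<Longrightarrow> real a \<le> (\<Sum>x\<in>A. real (f x) + real (g x))"
proof -
  assume h: "a \<le> (\<Sum>x\<in>A. f x + g x)"
  have "real a \<le> real (\<Sum>x\<in>A. f x + g x)" using h by (simp only: of_nat_le_iff)
  then show ?thesis by (simp only: of_nat_sum of_nat_add)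
qed

lemma real_le_powI: "(a::nat) \<le> b ^ m \<Longrightarrow> real a \<le> real b ^ m"
proof -
  assume h: "a \<le> b ^ m"
  have "real a \<le> real (b ^ m)" using h by (simp only: of_nat_le_iff)
  then show ?thesis by (simp only: of_nat_power)
qed

lemma perS_bound:
  assumes Sn: "S \<subseteq> {0..<n}" and cS: "card S = k" and t1: "1 \<le> t"
  shows "real (card {G \<in> Pow (vpairs n). \<exists>T. T \<subseteq> {U. U \<subseteq> S \<and> card U = t - 1} \<and>
            \<not> (\<exists>v\<in>{0..<n} - S. \<forall>U. U \<subseteq> S \<longrightarrow> card U = t - 1 \<longrightarrow> (insert v U \<in> theta t n G \<longleftrightarrow> U \<in> T))})
     \<le> 2 ^ (2 ^ k) * (2 ^ k + 1) * (1 - (1/2) ^ (2 ^ k)) ^ ((n - k) div 2) * 2 ^ card (vpairs n)"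
proof -
  let ?E = "vpairs n"
  let ?m = "(n - k) div 2"
  let ?q = "1 - (1/2::real) ^ (2 ^ k)"
  let ?Bs = "{U. U \<subseteq> S \<and> card U = t - 1}"
  define rest where "rest = {0..<n} - S"
  have finS: "finite S" using Sn finite_subset by blast
  have kn: "k \<le> n" using card_mono[OF _ Sn] cS by simp
  have crest: "card rest = n - k" unfolding rest_def using card_Diff_subset[OF finS Sn] cS by simp
  have "?m \<le> card rest" using crest by simp
  then obtain W where W: "W \<subseteq> rest" "card W = ?m" "finite W" by (rule obtain_subset_with_card_n)
  define R where "R = rest - W"
  have finrest: "finite rest" unfolding rest_def by simp
  have cR: "card R = (n - k) - ?m" unfolding R_def using card_Diff_subset[OF W(3) W(1)] crest W(2) by simp
  have mR: "?m \<le> card R" using cR by simp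
  have Wn: "W \<subseteq> {0..<n}" using W(1) unfolding rest_def by blast
  have Rn: "R \<subseteq> {0..<n}" unfolding R_def rest_def by blast
  have SW: "S \<inter> W = {}" using W(1) unfolding rest_def by blast
  have SR: "S \<inter> R = {}" unfolding R_def rest_def by blast
  have WR: "W \<inter> R = {}" unfolding R_def by blast
  have q0: "0 \<le> ?q" by (simp add: power_le_one)
  have q1: "?q \<le> 1" by simp
  have q1k0: "0 \<le> 1 - (1/2::real) ^ k" by (simp add: power_le_one)
  have qq: "1 - (1/2::real) ^ k \<le> ?q"
  proof -
    have "k \<le> 2 ^ k" using less_exp[of k] by simp
    then have "(1/2::real) ^ (2 ^ k) \<le> (1/2) ^ k" by (rule power_decreasing) auto
    then show ?thesis by simp
  qed
  have cBs: "card ?Bs \<le> 2 ^ k"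
  proof -
    have "card ?Bs \<le> card (Pow S)" by (rule card_mono) (use finS in auto)
    then show ?thesis using finS cS by (simp add: card_Pow)
  qed
  define Good where "Good G = (\<forall>U. U \<subseteq> S \<and> card U = t - 1 \<longrightarrow> (\<exists>y\<in>R. \<forall>x\<in>S. adj G y x \<longleftrightarrow> x \<in> U))" for G
  define Bad1 where "Bad1 = {G \<in> Pow ?E. \<not> Good G}"
  define Bad2 where "Bad2 T = {G \<in> Pow ?E. Good G \<and>
            (\<forall>v\<in>W. \<not> (\<forall>U. U \<subseteq> S \<longrightarrow> card U = t - 1 \<longrightarrow> (insert v U \<in> theta t n G \<longleftrightarrow> U \<in> T)))}" for T
  define C1 where "C1 U = {G \<in> Pow ?E. \<forall>y\<in>R. \<not> (\<forall>x\<in>S. adj G y x \<longleftrightarrow> x \<in> U)}" for U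
  have finPE: "finite (Pow ?E)" using fin_vpairs by simp
  have Bad1_sub: "Bad1 \<subseteq> (\<Union>U\<in>?Bs. C1 U)" unfolding Bad1_def Good_def C1_def by blast
  have "card Bad1 \<le> card (\<Union>U\<in>?Bs. C1 U)"
  proof -
    have sub: "(\<Union>U\<in>?Bs. C1 U) \<subseteq> Pow ?E" unfolding C1_def by blast
    show ?thesis by (rule card_mono[OF finite_subset[OF sub finPE] Bad1_sub])
  qed
  also have "\<dots> \<le> (\<Sum>U\<in>?Bs. card (C1 U))" by (rule card_UN_le) (use finS in simp)
  finally have "real (card Bad1) \<le> (\<Sum>U\<in>?Bs. real (card (C1 U)))"
    by (rule real_le_sumI)
  also have "\<dots> \<le> (\<Sum>U\<in>?Bs. ?q ^ ?m * 2 ^ card ?E)"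
  proof (rule sum_mono)
    fix U assume U: "U \<in> ?Bs"
    have "real (card (C1 U)) \<le> (1 - (1/2) ^ card S) ^ card R * 2 ^ card ?E"
      unfolding C1_def by (rule good_fail_count[OF Sn Rn SR finS]) (use U in blast)
    also have "\<dots> \<le> (1 - (1/2) ^ k) ^ ?m * 2 ^ card ?E"
      unfolding cS by (intro mult_right_mono power_decreasing mR) (use q1k0 in auto)
    also have "\<dots> \<le> ?q ^ ?m * 2 ^ card ?E"
      by (intro mult_right_mono power_mono qq q1k0) auto
    finally show "real (card (C1 U)) \<le> ?q ^ ?m * 2 ^ card ?E" .
  qed
  also have "\<dots> = real (card ?Bs) * (?q ^ ?m * 2 ^ card ?E)" by simp
  also have "\<dots> \<le> 2 ^ k * (?q ^ ?m * 2 ^ card ?E)"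
  proof (rule mult_right_mono)
    show "real (card ?Bs) \<le> 2 ^ k" using real_le_powI[OF cBs] by simp
  qed (use q0 in simp)
  finally have b1: "real (card Bad1) \<le> 2 ^ k * (?q ^ ?m * 2 ^ card ?E)" .
  have b2: "real (card (Bad2 T)) \<le> ?q ^ ?m * 2 ^ card ?E" for T
  proof -
    have "real (card (Bad2 T)) \<le> ?q ^ card W * 2 ^ card ?E"
      unfolding Bad2_def Good_def cS[symmetric]
      by (rule ext_fail_count[OF Sn Wn Rn SW SR WR finS t1])
    then show ?thesis using W(2) by simp
  qed
  let ?X = "{G \<in> Pow (vpairs n). \<exists>T. T \<subseteq> ?Bs \<and>
            \<not> (\<exists>v\<in>{0..<n} - S. \<forall>U. U \<subseteq> S \<longrightarrow> card U = t - 1 \<longrightarrow> (insert v U \<in> theta t n G \<longleftrightarrow> U \<in> T))}"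
  have Xsub: "?X \<subseteq> (\<Union>T\<in>Pow ?Bs. Bad1 \<union> Bad2 T)"
  proof
    fix G assume G: "G \<in> ?X"
    then obtain T where T: "T \<subseteq> ?Bs"
      and nv: "\<not> (\<exists>v\<in>{0..<n} - S. \<forall>U. U \<subseteq> S \<longrightarrow> card U = t - 1 \<longrightarrow> (insert v U \<in> theta t n G \<longleftrightarrow> U \<in> T))"
      by blast
    have "W \<subseteq> {0..<n} - S" using W(1) unfolding rest_def by blast
    then have "\<forall>v\<in>W. \<not> (\<forall>U. U \<subseteq> S \<longrightarrow> card U = t - 1 \<longrightarrow> (insert v U \<in> theta t n G \<longleftrightarrow> U \<in> T))"
      using nv by blast
    then have "G \<in> Bad1 \<union> Bad2 T" using G unfolding Bad1_def Bad2_def by blast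
    then show "G \<in> (\<Union>T\<in>Pow ?Bs. Bad1 \<union> Bad2 T)" using T by blast
  qed
  have finBs: "finite ?Bs" using finS by simp
  have "card ?X \<le> card (\<Union>T\<in>Pow ?Bs. Bad1 \<union> Bad2 T)"
  proof -
    have sub: "(\<Union>T\<in>Pow ?Bs. Bad1 \<union> Bad2 T) \<subseteq> Pow ?E" unfolding Bad1_def Bad2_def by blast
    show ?thesis by (rule card_mono[OF finite_subset[OF sub finPE] Xsub])
  qed
  also have "\<dots> \<le> (\<Sum>T\<in>Pow ?Bs. card (Bad1 \<union> Bad2 T))" by (rule card_UN_le) (use finBs in simp)
  also have "\<dots> \<le> (\<Sum>T\<in>Pow ?Bs. card Bad1 + card (Bad2 T))" by (rule sum_mono) (rule card_Un_le)
  finally have "real (card ?X) \<le> (\<Sum>T\<in>Pow ?Bs. real (card Bad1) + real (card (Bad2 T)))"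
    by (rule real_le_sum2I)
  also have "\<dots> \<le> (\<Sum>T\<in>Pow ?Bs. (2 ^ k + 1) * (?q ^ ?m * 2 ^ card ?E))"
    by (rule sum_mono, rule order_trans[OF add_mono[OF b1 b2]]) (simp add: algebra_simps)
  also have "\<dots> = real (card (Pow ?Bs)) * ((2 ^ k + 1) * (?q ^ ?m * 2 ^ card ?E))" by simp
  also have "\<dots> \<le> 2 ^ (2 ^ k) * ((2 ^ k + 1) * (?q ^ ?m * 2 ^ card ?E))"
  proof (rule mult_right_mono)
    have "card (Pow ?Bs) \<le> 2 ^ (2 ^ k)" using finBs cBs by (simp add: card_Pow power_increasing)
    then show "real (card (Pow ?Bs)) \<le> 2 ^ (2 ^ k)" using real_le_powI by fastforce
  qed (use q0 in simp)
  finally show ?thesis by (simp add: algebra_simps)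
qed

lemma poly_exp_tendsto:
  fixes r :: real
  assumes r0: "0 < r" and r1: "r < 1"
  shows "(\<lambda>n. real n ^ d * r ^ n) \<longlonglongrightarrow> 0"
proof -
  define s where "s = root (Suc d) r"
  have s0: "0 < s" unfolding s_def using r0 by (simp add: real_root_gt_zero)
  have s1: "s < 1" unfolding s_def using r1 by simp
  have sp: "s ^ Suc d = r" unfolding s_def by (rule real_root_pow_pos) (use r0 in auto)
  have "(\<lambda>n. of_nat n * s ^ n) \<longlonglongrightarrow> (0::real)"
    by (rule powser_times_n_limit_0) (use s0 s1 in simp)
  then have T: "(\<lambda>n. (of_nat n * s ^ n) ^ Suc d) \<longlonglongrightarrow> (0::real) ^ Suc d"
    by (rule tendsto_power)
  have EQ: "(of_nat n * s ^ n) ^ Suc d = real n ^ Suc d * r ^ n" for n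
  proof -
    have e: "(s ^ n) ^ Suc d = (s ^ Suc d) ^ n" by (simp only: power_mult[symmetric] mult.commute)
    have "(of_nat n * s ^ n) ^ Suc d = real n ^ Suc d * (s ^ n) ^ Suc d" by (rule power_mult_distrib)
    also have "\<dots> = real n ^ Suc d * r ^ n" by (simp only: e sp)
    finally show ?thesis .
  qed
  have funeq: "(\<lambda>n. (of_nat n * s ^ n) ^ Suc d) = (\<lambda>n. real n ^ Suc d * r ^ n)"
    by (rule ext) (rule EQ)
  have lim: "(\<lambda>n. real n ^ Suc d * r ^ n) \<longlonglongrightarrow> 0"
    using T unfolding funeq power_0_Suc .
  show ?thesis
  proof (rule tendsto_sandwich[OF _ _ tendsto_const lim])
    show "\<forall>\<^sub>F n in sequentially. 0 \<le> real n ^ d * r ^ n" using r0 by simp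
    show "\<forall>\<^sub>F n in sequentially. real n ^ d * r ^ n \<le> real n ^ Suc d * r ^ n"
    proof (rule eventually_sequentiallyI[of 1])
      fix n :: nat assume n: "1 \<le> n"
      have "real n ^ d \<le> real n ^ Suc d" using n by (intro power_increasing) auto
      then show "real n ^ d * r ^ n \<le> real n ^ Suc d * r ^ n" using r0 by (intro mult_right_mono) auto
    qed
  qed
qed

lemma fail_bound:
  assumes t1: "1 \<le> t"
  shows "fail_prob t k n \<le> real (n choose k) * (2 ^ (2 ^ k) * (2 ^ k + 1) * (1 - (1/2) ^ (2 ^ k)) ^ ((n - k) div 2))"
proof -
  let ?E = "vpairs n"
  let ?Ss = "{S. S \<subseteq> {0..<n} \<and> card S = k}"
  let ?K = "2 ^ (2 ^ k) * (2 ^ k + 1) * (1 - (1/2::real) ^ (2 ^ k)) ^ ((n - k) div 2)"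
  define X where "X S = {G \<in> Pow (vpairs n). \<exists>T. T \<subseteq> {U. U \<subseteq> S \<and> card U = t - 1} \<and>
            \<not> (\<exists>v\<in>{0..<n} - S. \<forall>U. U \<subseteq> S \<longrightarrow> card U = t - 1 \<longrightarrow> (insert v U \<in> theta t n G \<longleftrightarrow> U \<in> T))}" for S
  let ?fail = "{G \<in> graphs n. \<not> EA t k {0..<n} (theta t n G)}"
  have sub: "?fail \<subseteq> (\<Union>S\<in>?Ss. X S)"
    unfolding graphs_def EA_def X_def by blast
  have finPE: "finite (Pow ?E)" using fin_vpairs by simp
  have sub2: "(\<Union>S\<in>?Ss. X S) \<subseteq> Pow ?E" unfolding X_def by blast
  have finSs: "finite ?Ss" by simp
  have "card ?fail \<le> card (\<Union>S\<in>?Ss. X S)" by (rule card_mono[OF finite_subset[OF sub2 finPE] sub])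
  also have "\<dots> \<le> (\<Sum>S\<in>?Ss. card (X S))" by (rule card_UN_le[OF finSs])
  finally have c1: "real (card ?fail) \<le> (\<Sum>S\<in>?Ss. real (card (X S)))"
    by (rule real_le_sumI)
  also have "\<dots> \<le> (\<Sum>S\<in>?Ss. ?K * 2 ^ card ?E)"
  proof (rule sum_mono)
    fix S assume S: "S \<in> ?Ss"
    show "real (card (X S)) \<le> ?K * 2 ^ card ?E"
      unfolding X_def using perS_bound[of S n k t] S t1 by simp
  qed
  also have "\<dots> = real (card ?Ss) * (?K * 2 ^ card ?E)" by simp
  also have "\<dots> = real (n choose k) * (?K * 2 ^ card ?E)"
    using n_subsets[of "{0..<n}" k] by simp
  finally have c2: "real (card ?fail) \<le> real (n choose k) * ?K * 2 ^ card ?E" by simp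
  have cg: "card (graphs n) = 2 ^ card ?E" unfolding graphs_def using fin_vpairs by (simp add: card_Pow)
  have "fail_prob t k n = real (card ?fail) / 2 ^ card ?E" unfolding fail_prob_def cg by simp
  also have "\<dots> \<le> real (n choose k) * ?K" using c2 by (simp add: divide_le_eq)
  finally show ?thesis .
qed

theorem mainTheorem15:
  fixes k t :: nat
  assumes "k \<ge> 1" and "t \<ge> 2"
  shows "negligible (fail_prob t k)"
  unfolding negligible_def
proof
  fix c :: nat
  define q where "q = 1 - (1/2::real) ^ (2 ^ k)"
  define K where "K = 2 ^ (2 ^ k) * (2 ^ k + 1 :: real)"
  define r where "r = sqrt q"
  have hpos: "0 < (1/2::real) ^ (2 ^ k)" by simp
  have hlt: "(1/2::real) ^ (2 ^ k) < 1" using power_less_one_iff[of "1/2::real" "2 ^ k"] by simp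
  have q0: "0 < q" unfolding q_def using hlt by simp
  have q1: "q < 1" unfolding q_def using hpos by simp
  have r0: "0 < r" unfolding r_def using q0 by simp
  have r1: "r < 1" unfolding r_def using q0 q1 by simp
  have rq: "r ^ 2 = q" unfolding r_def using q0 by simp
  have K0: "0 < K" unfolding K_def by (intro mult_pos_pos zero_less_power add_pos_pos) auto
  have lim: "(\<lambda>n. real n ^ (k + c) * r ^ n) \<longlonglongrightarrow> 0" by (rule poly_exp_tendsto[OF r0 r1])
  have eps: "0 < r ^ (k + 1) / K" using r0 K0 by simp
  have ev: "\<forall>\<^sub>F n in sequentially. real n ^ (k + c) * r ^ n < r ^ (k + 1) / K"
    using order_tendstoD(2)[OF lim eps] .
  show "\<forall>\<^sub>F n in sequentially. \<bar>fail_prob t k n\<bar> < 1 / real n ^ c"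
  proof (rule eventually_mono[OF eventually_conj[OF ev eventually_ge_at_top[of "k + 1"]]])
    fix n :: nat assume h: "real n ^ (k + c) * r ^ n < r ^ (k + 1) / K \<and> k + 1 \<le> n"
    then have hn: "k + 1 \<le> n" and hl: "real n ^ (k + c) * r ^ n < r ^ (k + 1) / K" by auto
    have fp0: "0 \<le> fail_prob t k n" unfolding fail_prob_def by simp
    have fb: "fail_prob t k n \<le> real (n choose k) * (K * q ^ ((n - k) div 2))"
      using fail_bound[of t k n] assms unfolding K_def q_def by (simp add: mult.assoc)
    have ch: "real (n choose k) \<le> real n ^ k"
    proof -
      have "n choose k \<le> n ^ k" using hn by (intro binomial_le_pow) simp
      then show ?thesis by (rule real_le_powI)
    qed
    have qm: "q ^ ((n - k) div 2) \<le> r ^ (n - (k + 1))"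
    proof -
      have "q ^ ((n - k) div 2) = r ^ (2 * ((n - k) div 2))" using rq by (simp add: power_mult)
      also have "\<dots> \<le> r ^ (n - (k + 1))"
        by (rule power_decreasing) (use r0 r1 in auto)
      finally show ?thesis .
    qed
    have rn: "r ^ n = r ^ (n - (k + 1)) * r ^ (k + 1)"
    proof -
      have "n = n - (k + 1) + (k + 1)" using hn by simp
      then have "r ^ n = r ^ (n - (k + 1) + (k + 1))" by (rule arg_cong)
      then show ?thesis by (simp only: power_add)
    qed
    have "fail_prob t k n \<le> real n ^ k * (K * r ^ (n - (k + 1)))"
    proof -
      have "fail_prob t k n \<le> real (n choose k) * (K * q ^ ((n - k) div 2))" by (rule fb)
      also have "\<dots> \<le> real n ^ k * (K * r ^ (n - (k + 1)))"
        by (intro mult_mono ch mult_left_mono qm) (use K0 q0 in auto)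
      finally show ?thesis .
    qed
    then have "fail_prob t k n * real n ^ c \<le> real n ^ k * (K * r ^ (n - (k + 1))) * real n ^ c"
      by (rule mult_right_mono) simp
    also have "\<dots> = K / r ^ (k + 1) * (real n ^ (k + c) * r ^ n)"
      using r0 unfolding rn by (simp add: power_add field_simps)
    also have "\<dots> < K / r ^ (k + 1) * (r ^ (k + 1) / K)"
      by (rule mult_strict_left_mono[OF hl]) (use K0 r0 in simp)
    also have "\<dots> = 1" using K0 r0 by simp
    finally have "fail_prob t k n * real n ^ c < 1" .
    moreover have "0 < real n ^ c" using hn by simp
    ultimately have "fail_prob t k n < 1 / real n ^ c" by (simp add: field_simps)
    then show "\<bar>fail_prob t k n\<bar> < 1 / real n ^ c" using fp0 by simp
  qed
qed

end
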